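(* Let $n\ge2$ and let $\mathcal{A}$ be a complex algebra with basis $e_1,\dots,e_{n+1}$ whose structure constants satisfy ( * ), such that $\operatorname{Ann}\mathcal{A}=\langle e_{n+1}\rangle$, $e_1e_n=0$ and $e_i^2=e_{i+1}$ for all $1\le i\le n$. Suppose that the automorphisms of $\mathcal{A}/\langle e_{n+1}\rangle$ are exactly the linear maps $\bar e_1\mapsto\bar e_1+x\bar e_n$, $\bar e_i\mapsto\bar e_i$ ($2\le i\le n$), $x\in\mathbb{C}$, where $\bar e_i=e_i+\langle e_{n+1}\rangle$. Then the automorphisms of $\mathcal{A}$ are exactly the linear maps $e_1\mapsto e_1+xe_{n+1}$, $e_i\mapsto e_i$ ($2\le i\le n+1$), $x\in\mathbb{C}$.
   Context: Structure constants: $e_ie_j=\sum_kc_{ij}^ke_k$. Condition ( * ): $c_{ij}^k=0$ whenever $k\le\max\{i,j\}$. $\operatorname{Ann}\mathcal{A}=\{a\in\mathcal{A}: a\mathcal{A}+\mathcal{A}a=0\}$. *)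

theory Defs
  imports Main "HOL-Complex_Analysis.Complex_Analysis"
begin

text \<open>An N-dimensional complex algebra with basis e_1..e_N, given by structure
constants c i j k (e_i e_j = sum_k c i j k e_k), indices in {1..N}.
Elements are coordinate vectors nat => complex supported on {1..N};
linear maps are matrices nat => nat => complex supported on {1..N}^2,
column j being the image of e_j.\<close>

definition vecs :: "nat \<Rightarrow> (nat \<Rightarrow> complex) set" where
  "vecs N = {a. \<forall>k. k \<notin> {1..N} \<longrightarrow> a k = 0}"

definition basis_vec :: "nat \<Rightarrow> nat \<Rightarrow> complex" where
  "basis_vec i = (\<lambda>k. if k = i then 1 else 0)"

definition alg_mult :: "nat \<Rightarrow> (nat \<Rightarrow> nat \<Rightarrow> nat \<Rightarrow> complex)
    \<Rightarrow> (nat \<Rightarrow> complex) \<Rightarrow> (nat \<Rightarrow> complex) \<Rightarrow> (nat \<Rightarrow> complex)" where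
  "alg_mult N c a b = (\<lambda>k. if k \<in> {1..N}
      then (\<Sum>i\<in>{1..N}. \<Sum>j\<in>{1..N}. a i * b j * c i j k) else 0)"

definition mats :: "nat \<Rightarrow> (nat \<Rightarrow> nat \<Rightarrow> complex) set" where
  "mats N = {M. \<forall>i j. (i \<notin> {1..N} \<or> j \<notin> {1..N}) \<longrightarrow> M i j = 0}"

definition mat_apply :: "nat \<Rightarrow> (nat \<Rightarrow> nat \<Rightarrow> complex) \<Rightarrow> (nat \<Rightarrow> complex) \<Rightarrow> (nat \<Rightarrow> complex)" where
  "mat_apply N M a = (\<lambda>i. if i \<in> {1..N} then (\<Sum>j\<in>{1..N}. M i j * a j) else 0)"

definition alg_aut :: "nat \<Rightarrow> (nat \<Rightarrow> nat \<Rightarrow> nat \<Rightarrow> complex) \<Rightarrow> (nat \<Rightarrow> nat \<Rightarrow> complex) set" where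
  "alg_aut N c = {M. M \<in> mats N
      \<and> bij_betw (mat_apply N M) (vecs N) (vecs N)
      \<and> (\<forall>a\<in>vecs N. \<forall>b\<in>vecs N.
           mat_apply N M (alg_mult N c a b) = alg_mult N c (mat_apply N M a) (mat_apply N M b))}"

definition alg_ann :: "nat \<Rightarrow> (nat \<Rightarrow> nat \<Rightarrow> nat \<Rightarrow> complex) \<Rightarrow> (nat \<Rightarrow> complex) set" where
  "alg_ann N c = {a \<in> vecs N. \<forall>b\<in>vecs N. alg_mult N c a b = (\<lambda>_. 0) \<and> alg_mult N c b a = (\<lambda>_. 0)}"

definition cond_star :: "nat \<Rightarrow> (nat \<Rightarrow> nat \<Rightarrow> nat \<Rightarrow> complex) \<Rightarrow> bool" where
  "cond_star N c = (\<forall>i\<in>{1..N}. \<forall>j\<in>{1..N}. \<forall>k\<in>{1..N}. k \<le> max i j \<longrightarrow> c i j k = 0)"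

definition shear_mat :: "nat \<Rightarrow> complex \<Rightarrow> nat \<Rightarrow> nat \<Rightarrow> complex" where
  "shear_mat N x = (\<lambda>i j. if i \<in> {1..N} \<and> j \<in> {1..N}
      then (if i = j then 1 else 0) + (if i = N \<and> j = 1 then x else 0) else 0)"

end

theory Submission
  imports Defs
begin


definition struct_eq where
 "struct_eq N c M \<longleftrightarrow> (\<forall>i\<in>{1..N}. \<forall>j\<in>{1..N}. \<forall>k\<in>{1..N}.
    (\<Sum>l\<in>{1..N}. M k l * c i j l) = (\<Sum>p\<in>{1..N}. \<Sum>q\<in>{1..N}. M p i * M q j * c p q k))"

lemma basis_in_vecs: "i \<in> {1..N} \<Longrightarrow> basis_vec i \<in> vecs N"
  by (auto simp: basis_vec_def vecs_def)

lemma mult_basis: "i \<in> {1..N} \<Longrightarrow> j \<in> {1..N} \<Longrightarrow>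
   alg_mult N c (basis_vec i) (basis_vec j) = (\<lambda>k. if k \<in> {1..N} then c i j k else 0)"
proof
  fix k
  assume ij: "i \<in> {1..N}" "j \<in> {1..N}"
  have "\<And>ia. (\<Sum>ja\<in>{1..N}. basis_vec i ia * basis_vec j ja * c ia ja k) = basis_vec i ia * c ia j k"
  proof -
    fix ia
    have "(\<Sum>ja\<in>{1..N}. basis_vec i ia * basis_vec j ja * c ia ja k) = (\<Sum>ja\<in>{1..N}. if ja = j then basis_vec i ia * c ia j k else 0)"
      by (rule sum.cong) (auto simp: basis_vec_def)
    then show "?thesis ia" using ij by simp
  qed
  moreover have "(\<Sum>ia\<in>{1..N}. basis_vec i ia * c ia j k) = (\<Sum>ia\<in>{1..N}. if ia = i then c i j k else 0)"
    by (rule sum.cong) (auto simp: basis_vec_def)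
  ultimately show "alg_mult N c (basis_vec i) (basis_vec j) k = (if k \<in> {1..N} then c i j k else 0)"
    using ij by (simp add: alg_mult_def)
qed

lemma apply_basis: "j \<in> {1..N} \<Longrightarrow>
   mat_apply N M (basis_vec j) = (\<lambda>i. if i \<in> {1..N} then M i j else 0)"
proof
  fix i assume j: "j \<in> {1..N}"
  have "(\<Sum>ja\<in>{1..N}. M i ja * basis_vec j ja) = (\<Sum>ja\<in>{1..N}. if ja = j then M i j else 0)"
    by (rule sum.cong) (auto simp: basis_vec_def)
  then show "mat_apply N M (basis_vec j) i = (if i \<in> {1..N} then M i j else 0)"
    using j by (simp add: mat_apply_def)
qed

lemma swap3: "(\<Sum>l\<in>A. \<Sum>p\<in>B. \<Sum>q\<in>C. f l p q) = (\<Sum>p\<in>B. \<Sum>q\<in>C. \<Sum>l\<in>A. f l p q)"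
proof -
  have "(\<Sum>l\<in>A. \<Sum>p\<in>B. \<Sum>q\<in>C. f l p q) = (\<Sum>p\<in>B. \<Sum>l\<in>A. \<Sum>q\<in>C. f l p q)" by (rule sum.swap)
  also have "\<dots> = (\<Sum>p\<in>B. \<Sum>q\<in>C. \<Sum>l\<in>A. f l p q)" by (rule sum.cong[OF refl], rule sum.swap)
  finally show ?thesis .
qed

lemma swap4: "(\<Sum>p\<in>A. \<Sum>q\<in>B. \<Sum>r\<in>C. \<Sum>s\<in>D. f p q r s) = (\<Sum>r\<in>C. \<Sum>s\<in>D. \<Sum>p\<in>A. \<Sum>q\<in>B. f p q r s)"
proof -
  have "(\<Sum>p\<in>A. \<Sum>q\<in>B. \<Sum>r\<in>C. \<Sum>s\<in>D. f p q r s) = (\<Sum>p\<in>A. \<Sum>r\<in>C. \<Sum>s\<in>D. \<Sum>q\<in>B. f p q r s)"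
    by (rule sum.cong[OF refl], rule swap3)
  also have "\<dots> = (\<Sum>r\<in>C. \<Sum>s\<in>D. \<Sum>p\<in>A. \<Sum>q\<in>B. f p q r s)" by (rule swap3)
  finally show ?thesis .
qed

lemma mult_imp_struct:
  assumes "\<forall>a\<in>vecs N. \<forall>b\<in>vecs N. mat_apply N M (alg_mult N c a b) = alg_mult N c (mat_apply N M a) (mat_apply N M b)"
  shows "struct_eq N c M"
  unfolding struct_eq_def
proof (intro ballI)
  fix i j k assume ijk: "i \<in> {1..N}" "j \<in> {1..N}" "k \<in> {1..N}"
  have "mat_apply N M (alg_mult N c (basis_vec i) (basis_vec j)) k
     = alg_mult N c (mat_apply N M (basis_vec i)) (mat_apply N M (basis_vec j)) k"
    using assms basis_in_vecs ijk by metis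
  then have "mat_apply N M (\<lambda>k. if k \<in> {1..N} then c i j k else 0) k
     = alg_mult N c (\<lambda>p. if p \<in> {1..N} then M p i else 0) (\<lambda>p. if p \<in> {1..N} then M p j else 0) k"
    unfolding mult_basis[OF ijk(1,2)] apply_basis[OF ijk(1)] apply_basis[OF ijk(2)] .
  then have H: "(\<Sum>x\<in>{1..N}. M k x * (if x \<in> {1..N} then c i j x else 0)) =
      (\<Sum>x\<in>{1..N}. \<Sum>xa\<in>{1..N}. (if x \<in> {1..N} then M x i else 0) *
             (if xa \<in> {1..N} then M xa j else 0) * c x xa k)"
    using ijk(3) unfolding mat_apply_def alg_mult_def by simp
  have L: "(\<Sum>x\<in>{1..N}. M k x * (if x \<in> {1..N} then c i j x else 0)) = (\<Sum>x\<in>{1..N}. M k x * c i j x)"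
    by (rule sum.cong) auto
  have R: "(\<Sum>x\<in>{1..N}. \<Sum>xa\<in>{1..N}. (if x \<in> {1..N} then M x i else 0) *
             (if xa \<in> {1..N} then M xa j else 0) * c x xa k) = (\<Sum>p\<in>{1..N}. \<Sum>q\<in>{1..N}. M p i * M q j * c p q k)"
    by (intro sum.cong refl) auto
  show "(\<Sum>l\<in>{1..N}. M k l * c i j l) = (\<Sum>p\<in>{1..N}. \<Sum>q\<in>{1..N}. M p i * M q j * c p q k)"
    using H L R by simp
qed

lemma struct_imp_mult:
  assumes "struct_eq N c M"
  shows "mat_apply N M (alg_mult N c a b) = alg_mult N c (mat_apply N M a) (mat_apply N M b)"
proof
  fix k
  show "mat_apply N M (alg_mult N c a b) k = alg_mult N c (mat_apply N M a) (mat_apply N M b) k"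
  proof (cases "k \<in> {1..N}")
    case False then show ?thesis unfolding mat_apply_def alg_mult_def by (simp only: False if_False)
  next
    case True
    have "mat_apply N M (alg_mult N c a b) k = (\<Sum>l\<in>{1..N}. M k l * (\<Sum>p\<in>{1..N}. \<Sum>q\<in>{1..N}. a p * b q * c p q l))"
      using True unfolding mat_apply_def alg_mult_def by (simp only: if_True) (intro sum.cong refl, auto)
    also have "\<dots> = (\<Sum>p\<in>{1..N}. \<Sum>q\<in>{1..N}. a p * b q * (\<Sum>l\<in>{1..N}. M k l * c p q l))"
    proof -
      have "(\<Sum>l\<in>{1..N}. M k l * (\<Sum>p\<in>{1..N}. \<Sum>q\<in>{1..N}. a p * b q * c p q l))
          = (\<Sum>l\<in>{1..N}. \<Sum>p\<in>{1..N}. \<Sum>q\<in>{1..N}. a p * b q * (M k l * c p q l))"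
        by (simp add: sum_distrib_left mult_ac)
      also have "\<dots> = (\<Sum>p\<in>{1..N}. \<Sum>q\<in>{1..N}. \<Sum>l\<in>{1..N}. a p * b q * (M k l * c p q l))"
        by (rule swap3)
      also have "\<dots> = (\<Sum>p\<in>{1..N}. \<Sum>q\<in>{1..N}. a p * b q * (\<Sum>l\<in>{1..N}. M k l * c p q l))"
        by (simp add: sum_distrib_left)
      finally show ?thesis .
    qed
    also have "\<dots> = (\<Sum>p\<in>{1..N}. \<Sum>q\<in>{1..N}. a p * b q * (\<Sum>r\<in>{1..N}. \<Sum>s\<in>{1..N}. M r p * M s q * c r s k))"
      using assms True unfolding struct_eq_def by (intro sum.cong refl) simp
    also have "\<dots> = (\<Sum>r\<in>{1..N}. \<Sum>s\<in>{1..N}. (\<Sum>p\<in>{1..N}. M r p * a p) * (\<Sum>q\<in>{1..N}. M s q * b q) * c r s k)"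
    proof -
      have "(\<Sum>p\<in>{1..N}. \<Sum>q\<in>{1..N}. a p * b q * (\<Sum>r\<in>{1..N}. \<Sum>s\<in>{1..N}. M r p * M s q * c r s k))
         = (\<Sum>p\<in>{1..N}. \<Sum>q\<in>{1..N}. \<Sum>r\<in>{1..N}. \<Sum>s\<in>{1..N}. (M r p * a p) * (M s q * b q) * c r s k)"
        by (simp add: sum_distrib_left mult_ac)
      also have "\<dots> = (\<Sum>r\<in>{1..N}. \<Sum>s\<in>{1..N}. \<Sum>p\<in>{1..N}. \<Sum>q\<in>{1..N}. (M r p * a p) * (M s q * b q) * c r s k)"
        by (rule swap4)
      also have "\<dots> = (\<Sum>r\<in>{1..N}. \<Sum>s\<in>{1..N}. (\<Sum>p\<in>{1..N}. M r p * a p) * (\<Sum>q\<in>{1..N}. M s q * b q) * c r s k)"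
        by (intro sum.cong refl) (subst sum_product, simp only: sum_distrib_right)
      finally show ?thesis .
    qed
    also have "\<dots> = alg_mult N c (mat_apply N M a) (mat_apply N M b) k"
      using True unfolding mat_apply_def alg_mult_def by (simp only: if_True) (intro sum.cong refl, auto)
    finally show ?thesis .
  qed
qed



lemma shear_col_sum:
  assumes "j \<in> {1..m}"
  shows "(\<Sum>p\<in>{1..m}. shear_mat m y p j * g p) = g j + (if j = 1 then y * g m else 0)"
proof -
  have "(\<Sum>p\<in>{1..m}. shear_mat m y p j * g p) =
        (\<Sum>p\<in>{1..m}. (if p = j then g j else 0) + (if p = m then (if j = 1 then y * g m else 0) else 0))"
    using assms by (intro sum.cong refl) (auto simp: shear_mat_def algebra_simps)
  also have "\<dots> = g j + (if j = 1 then y * g m else 0)"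
    using assms by (simp add: sum.distrib)
  finally show ?thesis .
qed

lemma shear_row_sum:
  assumes "k \<in> {1..m}"
  shows "(\<Sum>l\<in>{1..m}. shear_mat m y k l * g l) = g k + (if k = m then y * g 1 else 0)"
proof -
  have "(\<Sum>l\<in>{1..m}. shear_mat m y k l * g l) =
        (\<Sum>l\<in>{1..m}. (if l = k then g k else 0) + (if l = 1 then (if k = m then y * g 1 else 0) else 0))"
    using assms by (intro sum.cong refl) (auto simp: shear_mat_def algebra_simps)
  also have "\<dots> = g k + (if k = m then y * g 1 else 0)"
    using assms by (simp add: sum.distrib)
  finally show ?thesis .
qed

lemma shear_apply:
  assumes "a \<in> vecs m" "m \<ge> 1"
  shows "mat_apply m (shear_mat m x) a = (\<lambda>i. a i + (if i = m then x * a 1 else 0))"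
proof
  fix i show "mat_apply m (shear_mat m x) a i = a i + (if i = m then x * a 1 else 0)"
  proof (cases "i \<in> {1..m}")
    case True
    have "mat_apply m (shear_mat m x) a i = (\<Sum>l\<in>{1..m}. shear_mat m x i l * a l)"
      using True unfolding mat_apply_def by (simp only: if_True)
    then show ?thesis using shear_row_sum[OF True, of x a] by simp
  next
    case False then show ?thesis using assms by (auto simp: mat_apply_def vecs_def)
  qed
qed

lemma mat_apply_vecs: "mat_apply N M a \<in> vecs N"
  by (simp add: mat_apply_def vecs_def)

lemma shear_aut:
  assumes m: "m \<ge> 2" and c1: "\<forall>i\<in>{1..m}. \<forall>j\<in>{1..m}. c i j 1 = 0"
    and cm: "\<forall>j\<in>{1..m}. \<forall>k\<in>{1..m}. c m j k = 0 \<and> c j m k = 0"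
  shows "shear_mat m x \<in> alg_aut m c"
proof -
  have mats: "shear_mat m x \<in> mats m" by (simp add: mats_def shear_mat_def)
  have bij: "bij_betw (mat_apply m (shear_mat m x)) (vecs m) (vecs m)"
  proof (rule bij_betw_byWitness[where f' = "mat_apply m (shear_mat m (-x))"])
    show "\<forall>a\<in>vecs m. mat_apply m (shear_mat m (- x)) (mat_apply m (shear_mat m x) a) = a"
    proof
      fix a assume a: "a \<in> vecs m"
      then have "(\<lambda>i. a i + (if i = m then x * a 1 else 0)) \<in> vecs m"
        using m by (auto simp: vecs_def)
      then show "mat_apply m (shear_mat m (- x)) (mat_apply m (shear_mat m x) a) = a"
        using a m by (simp add: shear_apply fun_eq_iff algebra_simps)
    qed
    show "\<forall>a\<in>vecs m. mat_apply m (shear_mat m x) (mat_apply m (shear_mat m (- x)) a) = a"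
    proof
      fix a assume a: "a \<in> vecs m"
      then have "(\<lambda>i. a i + (if i = m then (-x) * a 1 else 0)) \<in> vecs m"
        using m by (auto simp: vecs_def)
      then show "mat_apply m (shear_mat m x) (mat_apply m (shear_mat m (- x)) a) = a"
        using a m by (simp add: shear_apply fun_eq_iff algebra_simps)
    qed
  qed (auto simp: mat_apply_vecs)
  have se: "struct_eq m c (shear_mat m x)"
    unfolding struct_eq_def
  proof (intro ballI)
    fix i j k assume ijk: "i \<in> {1..m}" "j \<in> {1..m}" "k \<in> {1..m}"
    have mm: "m \<in> {1..m}" "1 \<in> {1..m}" using m by auto
    have L: "(\<Sum>l\<in>{1..m}. shear_mat m x k l * c i j l) = c i j k"
      using ijk c1 shear_row_sum[OF ijk(3), of x "c i j"] by simp
    have h: "(\<Sum>q\<in>{1..m}. shear_mat m x q j * c p q k) = c p j k" if "p \<in> {1..m}" for p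
      using that ijk cm shear_col_sum[OF ijk(2), of x "\<lambda>q. c p q k"] by simp
    have "(\<Sum>p\<in>{1..m}. \<Sum>q\<in>{1..m}. shear_mat m x p i * shear_mat m x q j * c p q k)
        = (\<Sum>p\<in>{1..m}. shear_mat m x p i * (\<Sum>q\<in>{1..m}. shear_mat m x q j * c p q k))"
      by (simp add: sum_distrib_left mult.assoc)
    also have "\<dots> = (\<Sum>p\<in>{1..m}. shear_mat m x p i * c p j k)"
      using h by (intro sum.cong refl) simp
    also have "\<dots> = c i j k"
      using ijk cm mm shear_col_sum[OF ijk(1), of x "\<lambda>p. c p j k"] by simp
    finally show "(\<Sum>l\<in>{1..m}. shear_mat m x k l * c i j l) =
       (\<Sum>p\<in>{1..m}. \<Sum>q\<in>{1..m}. shear_mat m x p i * shear_mat m x q j * c p q k)"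
      using L by simp
  qed
  show ?thesis unfolding alg_aut_def using mats bij struct_imp_mult[OF se] by blast
qed



lemma mat_apply_lin: "mat_apply N M (\<lambda>i. u * f i + v * g i) = (\<lambda>i. u * mat_apply N M f i + v * mat_apply N M g i)"
  by (auto simp: mat_apply_def sum.distrib sum_distrib_left algebra_simps fun_eq_iff)

lemma mat_apply_scale: "mat_apply N M (\<lambda>i. u * f i) = (\<lambda>i. u * mat_apply N M f i)"
  by (auto simp: mat_apply_def sum_distrib_left algebra_simps fun_eq_iff)

lemma mat_apply_zero: "mat_apply N M (\<lambda>_. 0) = (\<lambda>_. 0)"
  by (auto simp: mat_apply_def fun_eq_iff)

lemma sum_drop_last: "f (Suc n) = 0 \<Longrightarrow> (\<Sum>l\<in>{1..Suc n}. f l) = (\<Sum>l\<in>{1..n}. f l)"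
  by (simp add: sum.cl_ivl_Suc)

lemma vecs_mono: "a \<in> vecs n \<Longrightarrow> a \<in> vecs (Suc n)"
  by (auto simp: vecs_def)

theorem mainTheorem10:
  fixes n :: nat and c :: "nat \<Rightarrow> nat \<Rightarrow> nat \<Rightarrow> complex"
  assumes "n \<ge> 2"
    and "cond_star (n+1) c"
    and "alg_ann (n+1) c = {(\<lambda>k. t * basis_vec (n+1) k) | t. True}"
    and "\<forall>k\<in>{1..n+1}. c 1 n k = 0"
    and "\<forall>i\<in>{1..n}. \<forall>k\<in>{1..n+1}. c i i k = (if k = i + 1 then 1 else 0)"
    and "alg_aut n c = {shear_mat n x | x. True}"
  shows "alg_aut (n+1) c = {shear_mat (n+1) x | x. True}"
proof -
  note n2 = assms(1)
  have cs: "c i j k = 0" if "i \<in> {1..Suc n}" "j \<in> {1..Suc n}" "k \<in> {1..Suc n}" "k \<le> max i j" for i j k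
    using assms(2) that unfolding cond_star_def by simp
  have eN: "basis_vec (Suc n) \<in> alg_ann (Suc n) c"
  proof -
    have "(\<lambda>k. 1 * basis_vec (n+1) k) \<in> alg_ann (n+1) c" using assms(3) by blast
    then show ?thesis by simp
  qed
  have cN: "c (Suc n) j k = 0 \<and> c j (Suc n) k = 0" if "j \<in> {1..Suc n}" "k \<in> {1..Suc n}" for j k
  proof -
    have sN: "Suc n \<in> {1..Suc n}" by simp
    have "alg_mult (Suc n) c (basis_vec (Suc n)) (basis_vec j) = (\<lambda>_. 0)"
         "alg_mult (Suc n) c (basis_vec j) (basis_vec (Suc n)) = (\<lambda>_. 0)"
      using eN basis_in_vecs[OF that(1)] unfolding alg_ann_def by auto
    then show ?thesis
      unfolding mult_basis[OF sN that(1)] mult_basis[OF that(1) sN]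
      using that(2) by (metis (mono_tags, lifting))
  qed
  show ?thesis
  proof
    show "{shear_mat (n+1) x | x. True} \<subseteq> alg_aut (n+1) c"
    proof clarify
      fix x
      show "shear_mat (n+1) x \<in> alg_aut (n+1) c"
        apply (rule shear_aut)
        using n2 apply simp
        subgoal
        proof (intro ballI)
          fix i j assume "i \<in> {1..n+1}" "j \<in> {1..n+1}"
          then show "c i j 1 = 0" by (intro cs) auto
        qed
        subgoal using cN by (metis Suc_eq_plus1)
        done
    qed
  next
    show "alg_aut (n+1) c \<subseteq> {shear_mat (n+1) x | x. True}"
    proof
      fix M assume "M \<in> alg_aut (n+1) c"
      then have matsM: "M \<in> mats (Suc n)" and bijA: "bij_betw (mat_apply (Suc n) M) (vecs (Suc n)) (vecs (Suc n))"
        and mult: "\<forall>a\<in>vecs (Suc n). \<forall>b\<in>vecs (Suc n). mat_apply (Suc n) M (alg_mult (Suc n) c a b) =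
             alg_mult (Suc n) c (mat_apply (Suc n) M a) (mat_apply (Suc n) M b)"
        unfolding alg_aut_def by auto
      define A where "A = mat_apply (Suc n) M"
      have se: "struct_eq (Suc n) c M" using mult_imp_struct[OF mult] .
      have sN: "Suc n \<in> {1..Suc n}" by simp
      have surjA: "A ` vecs (Suc n) = vecs (Suc n)" using bijA unfolding A_def bij_betw_def by simp
      have injA: "inj_on A (vecs (Suc n))" using bijA unfolding A_def bij_betw_def by simp
      have "A (basis_vec (Suc n)) \<in> alg_ann (Suc n) c"
        unfolding alg_ann_def
      proof (intro CollectI conjI ballI)
        show "A (basis_vec (Suc n)) \<in> vecs (Suc n)" unfolding A_def by (rule mat_apply_vecs)
        fix b assume "b \<in> vecs (Suc n)"
        then obtain a' where a': "a' \<in> vecs (Suc n)" "b = A a'" using surjA by auto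
        have e0: "alg_mult (Suc n) c (basis_vec (Suc n)) a' = (\<lambda>_. 0)" "alg_mult (Suc n) c a' (basis_vec (Suc n)) = (\<lambda>_. 0)"
          using eN a' unfolding alg_ann_def by auto
        show "alg_mult (Suc n) c (A (basis_vec (Suc n))) b = (\<lambda>_. 0)"
          using mult a' basis_in_vecs[OF sN] e0 unfolding A_def by (metis mat_apply_zero)
        show "alg_mult (Suc n) c b (A (basis_vec (Suc n))) = (\<lambda>_. 0)"
          using mult a' basis_in_vecs[OF sN] e0 unfolding A_def by (metis mat_apply_zero)
      qed
      then obtain t where t: "A (basis_vec (Suc n)) = (\<lambda>k. t * basis_vec (Suc n) k)"
        using assms(3) by auto
      have AeN: "A (basis_vec (Suc n)) = (\<lambda>i. if i \<in> {1..Suc n} then M i (Suc n) else 0)"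
        unfolding A_def by (rule apply_basis[OF sN])
      have MkN: "M k (Suc n) = 0" if "k \<in> {1..n}" for k
        using fun_cong[OF AeN, of k] that unfolding t by (auto simp: basis_vec_def)
      have MNN: "M (Suc n) (Suc n) = t"
        using fun_cong[OF AeN, of "Suc n"] unfolding t by (auto simp: basis_vec_def)
      define M' where "M' = (\<lambda>i j. if i \<in> {1..n} \<and> j \<in> {1..n} then M i j else 0)"
      define A' where "A' = mat_apply n M'"
      have restr: "A' a i = A a i" if a: "a \<in> vecs n" and i: "i \<in> {1..n}" for a i
      proof -
        have aN: "a (Suc n) = 0" using a by (simp add: vecs_def)
        have "A a i = (\<Sum>j\<in>{1..Suc n}. M i j * a j)" using i unfolding A_def mat_apply_def by simp
        also have "\<dots> = (\<Sum>j\<in>{1..n}. M i j * a j)" using aN by (intro sum_drop_last) simp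
        also have "\<dots> = (\<Sum>j\<in>{1..n}. M' i j * a j)" using i by (intro sum.cong refl) (simp add: M'_def)
        also have "\<dots> = A' a i" using i unfolding A'_def mat_apply_def by simp
        finally show ?thesis by simp
      qed
      have matsM': "M' \<in> mats n" by (simp add: mats_def M'_def)
      have se': "struct_eq n c M'"
        unfolding struct_eq_def
      proof (intro ballI)
        fix i j k assume ijk: "i \<in> {1..n}" "j \<in> {1..n}" "k \<in> {1..n}"
        have ijk': "i \<in> {1..Suc n}" "j \<in> {1..Suc n}" "k \<in> {1..Suc n}" using ijk by auto
        have E: "(\<Sum>l\<in>{1..Suc n}. M k l * c i j l) = (\<Sum>p\<in>{1..Suc n}. \<Sum>q\<in>{1..Suc n}. M p i * M q j * c p q k)"
          using se ijk' unfolding struct_eq_def by blast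
        have "(\<Sum>l\<in>{1..Suc n}. M k l * c i j l) = (\<Sum>l\<in>{1..n}. M k l * c i j l)"
          using MkN[OF ijk(3)] by (intro sum_drop_last) simp
        also have "\<dots> = (\<Sum>l\<in>{1..n}. M' k l * c i j l)"
          using ijk by (intro sum.cong refl) (simp add: M'_def)
        finally have L: "(\<Sum>l\<in>{1..Suc n}. M k l * c i j l) = (\<Sum>l\<in>{1..n}. M' k l * c i j l)" .
        have "(\<Sum>p\<in>{1..Suc n}. \<Sum>q\<in>{1..Suc n}. M p i * M q j * c p q k)
            = (\<Sum>p\<in>{1..n}. \<Sum>q\<in>{1..Suc n}. M p i * M q j * c p q k)"
          using cN[OF _ ijk'(3)] by (intro sum_drop_last) simp
        also have "\<dots> = (\<Sum>p\<in>{1..n}. \<Sum>q\<in>{1..n}. M p i * M q j * c p q k)"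
          using cN[OF _ ijk'(3)] by (intro sum.cong refl sum_drop_last) simp
        also have "\<dots> = (\<Sum>p\<in>{1..n}. \<Sum>q\<in>{1..n}. M' p i * M' q j * c p q k)"
          using ijk by (intro sum.cong refl) (simp add: M'_def)
        finally show "(\<Sum>l\<in>{1..n}. M' k l * c i j l) = (\<Sum>p\<in>{1..n}. \<Sum>q\<in>{1..n}. M' p i * M' q j * c p q k)"
          using E L by simp
      qed
      have tnz: "t \<noteq> 0"
      proof
        assume "t = 0"
        then have "A (basis_vec (Suc n)) = A (\<lambda>_. 0)" using t unfolding A_def by (simp add: mat_apply_zero)
        moreover have "(\<lambda>_. 0) \<in> vecs (Suc n)" by (simp add: vecs_def)
        ultimately have "basis_vec (Suc n) = (\<lambda>_. 0)" using injA basis_in_vecs[OF sN] by (meson inj_onD)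
        then have "basis_vec (Suc n) (Suc n) = 0" by simp
        then show False by (simp add: basis_vec_def)
      qed
      have injA': "inj_on A' (vecs n)"
      proof (rule inj_onI)
        fix a a2 assume a: "a \<in> vecs n" and a2: "a2 \<in> vecs n" and eq: "A' a = A' a2"
        define d where "d = (\<lambda>i. 1 * a i + (-1) * a2 i)"
        have Ad: "A d = (\<lambda>i. A a i - A a2 i)" unfolding d_def A_def mat_apply_lin by simp
        have dv: "d \<in> vecs (Suc n)" using a a2 by (auto simp: d_def vecs_def)
        define r where "r = A d (Suc n) / t"
        have "A d = (\<lambda>k. A d (Suc n) * basis_vec (Suc n) k)"
        proof
          fix k show "A d k = A d (Suc n) * basis_vec (Suc n) k"
          proof (cases "k \<in> {1..n}")
            case True then show ?thesis using restr[OF a True] restr[OF a2 True] eq Ad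
              by (auto simp: basis_vec_def)
          next
            case False
            then have "k = Suc n \<or> k \<notin> {1..Suc n}" by auto
            then show ?thesis unfolding A_def by (auto simp: basis_vec_def mat_apply_def)
          qed
        qed
        also have "\<dots> = A (\<lambda>k. r * basis_vec (Suc n) k)"
        proof -
          have "A (\<lambda>k. r * basis_vec (Suc n) k) = (\<lambda>k. r * A (basis_vec (Suc n)) k)"
            unfolding A_def by (rule mat_apply_scale)
          also have "\<dots> = (\<lambda>k. (r * t) * basis_vec (Suc n) k)" unfolding t by (simp add: mult.assoc)
          also have "r * t = A d (Suc n)" unfolding r_def using tnz by simp
          finally show ?thesis by simp
        qed
        finally have "A d = A (\<lambda>k. r * basis_vec (Suc n) k)" .
        moreover have "(\<lambda>k. r * basis_vec (Suc n) k) \<in> vecs (Suc n)" by (auto simp: vecs_def basis_vec_def)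
        ultimately have dd: "d = (\<lambda>k. r * basis_vec (Suc n) k)" using injA dv by (meson inj_onD)
        have "a (Suc n) = 0" "a2 (Suc n) = 0" using a a2 by (auto simp: vecs_def)
        then have "r = 0" using fun_cong[OF dd, of "Suc n"] by (simp add: d_def basis_vec_def)
        then show "a = a2" using dd unfolding d_def by (auto simp: fun_eq_iff)
      qed
      have surjA': "A' ` vecs n = vecs n"
      proof
        show "A' ` vecs n \<subseteq> vecs n" unfolding A'_def using mat_apply_vecs by blast
        show "vecs n \<subseteq> A' ` vecs n"
        proof
          fix b assume b: "b \<in> vecs n"
          have "b \<in> A ` vecs (Suc n)" using surjA vecs_mono[OF b] by simp
          then obtain a where a: "a \<in> vecs (Suc n)" "A a = b" by blast
          define a' where "a' = (\<lambda>i. if i \<in> {1..n} then a i else 0)"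
          have a'v: "a' \<in> vecs n" by (simp add: a'_def vecs_def)
          have "A' a' = b"
          proof
            fix i show "A' a' i = b i"
            proof (cases "i \<in> {1..n}")
              case True
              have "A a i = (\<Sum>j\<in>{1..Suc n}. M i j * a j)" using True unfolding A_def mat_apply_def by simp
              also have "\<dots> = (\<Sum>j\<in>{1..n}. M i j * a j)" using MkN[OF True] by (intro sum_drop_last) simp
              also have "\<dots> = (\<Sum>j\<in>{1..n}. M' i j * a' j)" using True by (intro sum.cong refl) (simp add: M'_def a'_def)
              also have "\<dots> = A' a' i" using True unfolding A'_def mat_apply_def by simp
              finally show ?thesis using a by simp
            next
              case False then show ?thesis using b unfolding A'_def mat_apply_def vecs_def by auto
            qed
          qed
          then show "b \<in> A' ` vecs n" using a'v by blast
        qed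
      qed
      have "bij_betw A' (vecs n) (vecs n)" unfolding bij_betw_def using injA' surjA' by simp
      then have "M' \<in> alg_aut n c"
        unfolding alg_aut_def using matsM' struct_imp_mult[OF se'] unfolding A'_def by simp
      then obtain y where y: "M' = shear_mat n y" using assms(6) by auto
      have Ms: "M i j = shear_mat n y i j" if "i \<in> {1..n}" "j \<in> {1..n}" for i j
        using fun_cong[OF fun_cong[OF y, of i], of j] that by (simp add: M'_def)
      have n1: "n \<noteq> 1" "1 \<le> n" using n2 by auto
      have R: "(\<Sum>p\<in>{1..Suc n}. \<Sum>q\<in>{1..Suc n}. M p i * M q j * c p q (Suc n)) =
          (c i j (Suc n) + (if j = 1 then y * c i n (Suc n) else 0))
          + (if i = 1 then y * (c n j (Suc n) + (if j = 1 then y * c n n (Suc n) else 0)) else 0)"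
        if ij: "i \<in> {1..n}" "j \<in> {1..n}" for i j
      proof -
        have "(\<Sum>p\<in>{1..Suc n}. \<Sum>q\<in>{1..Suc n}. M p i * M q j * c p q (Suc n))
            = (\<Sum>p\<in>{1..n}. \<Sum>q\<in>{1..Suc n}. M p i * M q j * c p q (Suc n))"
          using cN[OF _ sN] by (intro sum_drop_last) simp
        also have "\<dots> = (\<Sum>p\<in>{1..n}. \<Sum>q\<in>{1..n}. M p i * M q j * c p q (Suc n))"
          using cN[OF _ sN] by (intro sum.cong refl sum_drop_last) simp
        also have "\<dots> = (\<Sum>p\<in>{1..n}. shear_mat n y p i * (\<Sum>q\<in>{1..n}. shear_mat n y q j * c p q (Suc n)))"
          using ij Ms by (simp add: sum_distrib_left mult.assoc)
        also have "\<dots> = (\<Sum>p\<in>{1..n}. shear_mat n y p i * (c p j (Suc n) + (if j = 1 then y * c p n (Suc n) else 0)))"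
          using shear_col_sum[OF ij(2), of y] by simp
        also have "\<dots> = (c i j (Suc n) + (if j = 1 then y * c i n (Suc n) else 0))
          + (if i = 1 then y * (c n j (Suc n) + (if j = 1 then y * c n n (Suc n) else 0)) else 0)"
          by (rule shear_col_sum[OF ij(1)])
        finally show ?thesis .
      qed
      have E: "(\<Sum>l\<in>{1..Suc n}. M (Suc n) l * c i j l) = (\<Sum>p\<in>{1..Suc n}. \<Sum>q\<in>{1..Suc n}. M p i * M q j * c p q (Suc n))"
        if "i \<in> {1..n}" "j \<in> {1..n}" for i j
      proof -
        have "i \<in> {1..Suc n}" "j \<in> {1..Suc n}" using that by auto
        then show ?thesis using se sN unfolding struct_eq_def by blast
      qed
      have nn: "n \<in> {1..n}" "1 \<in> {1..n}" using n1 by auto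
      have cii: "c i i l = (if l = Suc i then 1 else 0)" if "i \<in> {1..n}" "l \<in> {1..Suc n}" for i l
        using assms(5) that by simp
      have LD: "(\<Sum>l\<in>{1..Suc n}. M (Suc n) l * c i i l) = M (Suc n) (Suc i)" if i: "i \<in> {1..n}" for i
      proof -
        have "(\<Sum>l\<in>{1..Suc n}. M (Suc n) l * c i i l) = (\<Sum>l\<in>{1..Suc n}. if l = Suc i then M (Suc n) (Suc i) else 0)"
          using cii[OF i] by (intro sum.cong refl) auto
        also have "\<dots> = M (Suc n) (Suc i)" using i by simp
        finally show ?thesis .
      qed
      have M1: "M (Suc n) (Suc n) = 1"
        using E[OF nn(1) nn(1)] LD[OF nn(1)] R[OF nn(1) nn(1)] n1 cii[OF nn(1) sN] by simp
      have y0: "y = 0"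
      proof -
        have "(\<Sum>l\<in>{1..Suc n}. M (Suc n) l * c n 1 l) = (\<Sum>l\<in>{1..n}. M (Suc n) l * c n 1 l) + M (Suc n) (Suc n) * c n 1 (Suc n)"
          by (simp add: sum.cl_ivl_Suc)
        also have "(\<Sum>l\<in>{1..n}. M (Suc n) l * c n 1 l) = 0"
          by (rule sum.neutral) (use cs in \<open>auto simp: max_def\<close>)
        finally have "(\<Sum>l\<in>{1..Suc n}. M (Suc n) l * c n 1 l) = c n 1 (Suc n)" using M1 by simp
        then show ?thesis using E[OF nn(1) nn(2)] R[OF nn(1) nn(2)] n1 cii[OF nn(1) sN] by simp
      qed
      have MNi: "M (Suc n) j = 0" if "j \<in> {2..n}" for j
      proof -
        define i where "i = j - 1"
        have i: "j = Suc i" "i \<in> {1..n}" "i < n" using that unfolding i_def by auto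
        show ?thesis using E[OF i(2) i(2)] LD[OF i(2)] R[OF i(2) i(2)] y0 cii[OF i(2) sN] i by simp
      qed
      have "M = shear_mat (n+1) (M (Suc n) 1)"
      proof (intro ext)
        fix i j
        show "M i j = shear_mat (n+1) (M (Suc n) 1) i j"
        proof (cases "i \<in> {1..Suc n} \<and> j \<in> {1..Suc n}")
          case False then show ?thesis using matsM by (auto simp: mats_def shear_mat_def)
        next
          case True
          then consider "i \<in> {1..n}" "j \<in> {1..n}" | "i \<in> {1..n}" "j = Suc n" | "i = Suc n" "j = Suc n"
            | "i = Suc n" "j = 1" | "i = Suc n" "j \<in> {2..n}" by fastforce
          then show ?thesis
          proof cases
            case 1 then show ?thesis using Ms[OF 1] y0 n1 by (auto simp: shear_mat_def)
          next
            case 2 then show ?thesis using MkN by (auto simp: shear_mat_def)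
          next
            case 3 then show ?thesis using M1 n1 by (auto simp: shear_mat_def)
          next
            case 4 then show ?thesis using n1 by (auto simp: shear_mat_def)
          next
            case 5 then show ?thesis using MNi by (auto simp: shear_mat_def)
          qed
        qed
      qed
      then show "M \<in> {shear_mat (n+1) x | x. True}" by blast
    qed
  qed
qed


end
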